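(* Let $\mathcal R$ be a commutative ring and $\mathcal A$ an associative $\mathcal R$-algebra (not necessarily with identity) together with pairwise orthogonal idempotents $e_i$ ($i\in I$) such that $\mathcal A=\bigoplus_{i,i'\in I}e_i\mathcal Ae_{i'}$ and each $e_i\mathcal Ae_{i'}$ is a free $\mathcal R$-module. Let $\mathcal B=\{a_j\}_{j\in J}$ be an $\mathcal R$-basis of $\mathcal A$ such that, for all $i,i'$, the nonzero elements among $\{e_ia_je_{i'}\}_{j\in J}$ form a basis of $e_i\mathcal Ae_{i'}$, $\mathcal B=\bigcup_{i,i'}e_i\mathcal Be_{i'}$, and every $e_i$ lies in $\mathcal B$; for $j\in J$ let $ro(j),co(j)\in I$ be the unique indices with $e_{ro(j)}a_j=a_j$ and $a_je_{co(j)}=a_j$. Let $\mathfrak L$ be the set of formal (possibly infinite) linear combinations $f=\sum_{j\in J}f_ja_j$, $f_j\in\mathcal R$, and for $i\in I$ set $J(e_i,f)=\{j:f_j\ne0,\ ro(j)=i\}$, $J(f,e_i)=\{j:f_j\ne0,\ co(j)=i\}$. Define $${}^\dagger\widehat{\mathcal A}=\{f\in\mathfrak L:|J(e_i,f)|<\infty\ \forall i\},\quad \widehat{\mathcal A}^\dagger=\{f\in\mathfrak L:|J(f,e_i)|<\infty\ \forall i\},\quad \widehat{\mathcal A}={}^\dagger\widehat{\mathcal A}\cap\widehat{\mathcal A}^\dagger,$$ with product $\bigl(\sum_sf_sa_s\bigr)\bigl(\sum_tg_ta_t\bigr)=\sum_{s,t}f_sg_t\,a_sa_t$ (products $a_sa_t$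 computed in $\mathcal A$). Then this product is well defined on ${}^\dagger\widehat{\mathcal A}$ and on $\widehat{\mathcal A}^\dagger$, making each of them an associative $\mathcal R$-algebra with identity $1=\sum_{i\in I}e_i$, and $\widehat{\mathcal A}$ is a subalgebra with the same identity. *)

theory Defs
  imports Main
begin

text \<open>An associative (not necessarily unital) algebra over a commutative ring 'r:
  the carrier is the type 'a of class ring (Isabelle's class ring has no unit),
  and sm is the scalar multiplication.\<close>
definition algebra_over :: "('r::comm_ring_1 \<Rightarrow> 'a::ring \<Rightarrow> 'a) \<Rightarrow> bool" where
  "algebra_over sm \<longleftrightarrow>
     (\<forall>r s x. sm (r + s) x = sm r x + sm s x) \<and>
     (\<forall>r x y. sm r (x + y) = sm r x + sm r y) \<and>
     (\<forall>r s x. sm (r * s) x = sm r (sm s x)) \<and>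
     (\<forall>x. sm 1 x = x) \<and>
     (\<forall>r x y. sm r (x * y) = sm r x * y) \<and>
     (\<forall>r x y. sm r (x * y) = x * sm r y)"

definition lincomb :: "('r::comm_ring_1 \<Rightarrow> 'a::ring \<Rightarrow> 'a) \<Rightarrow> ('j \<Rightarrow> 'a) \<Rightarrow> ('j \<Rightarrow> 'r) \<Rightarrow> 'j set \<Rightarrow> 'a" where
  "lincomb sm f c K = (\<Sum>j\<in>{j\<in>K. c j \<noteq> 0}. sm (c j) (f j))"

definition indep_fam :: "('r::comm_ring_1 \<Rightarrow> 'a::ring \<Rightarrow> 'a) \<Rightarrow> ('j \<Rightarrow> 'a) \<Rightarrow> 'j set \<Rightarrow> bool" where
  "indep_fam sm f K \<longleftrightarrow>
     (\<forall>c. finite {j\<in>K. c j \<noteq> 0} \<and> lincomb sm f c K = 0 \<longrightarrow> (\<forall>j\<in>K. c j = 0))"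

definition span_fam :: "('r::comm_ring_1 \<Rightarrow> 'a::ring \<Rightarrow> 'a) \<Rightarrow> ('j \<Rightarrow> 'a) \<Rightarrow> 'j set \<Rightarrow> 'a set" where
  "span_fam sm f K = {lincomb sm f c K | c. finite {j\<in>K. c j \<noteq> 0}}"

definition basis_of :: "('r::comm_ring_1 \<Rightarrow> 'a::ring \<Rightarrow> 'a) \<Rightarrow> ('j \<Rightarrow> 'a) \<Rightarrow> 'j set \<Rightarrow> 'a set \<Rightarrow> bool" where
  "basis_of sm f K M \<longleftrightarrow> f ` K \<subseteq> M \<and> indep_fam sm f K \<and> span_fam sm f K = M"

definition free_submodule :: "('r::comm_ring_1 \<Rightarrow> 'a::ring \<Rightarrow> 'a) \<Rightarrow> 'a set \<Rightarrow> bool" where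
  "free_submodule sm M \<longleftrightarrow> (\<exists>S\<subseteq>M. basis_of sm id S M)"

definition corner :: "('i \<Rightarrow> 'a::ring) \<Rightarrow> 'i \<Rightarrow> 'i \<Rightarrow> 'a set" where
  "corner e i i' = {e i * x * e i' | x. True}"

definition corner_direct_sum :: "('i \<Rightarrow> 'a::ring) \<Rightarrow> bool" where
  "corner_direct_sum e \<longleftrightarrow>
     (\<forall>x. \<exists>!y :: 'i \<times> 'i \<Rightarrow> 'a. finite {p. y p \<noteq> 0} \<and>
            (\<forall>i i'. y (i, i') \<in> corner e i i') \<and>
            x = (\<Sum>p\<in>{p. y p \<noteq> 0}. y p))"

definition coord :: "('r::comm_ring_1 \<Rightarrow> 'a::ring \<Rightarrow> 'a) \<Rightarrow> ('j \<Rightarrow> 'a) \<Rightarrow> 'a \<Rightarrow> 'j \<Rightarrow> 'r" where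
  "coord sm a x = (THE c. finite {j. c j \<noteq> 0} \<and> lincomb sm a c UNIV = x)"

definition ro :: "('i \<Rightarrow> 'a::ring) \<Rightarrow> ('j \<Rightarrow> 'a) \<Rightarrow> 'j \<Rightarrow> 'i" where
  "ro e a j = (THE i. e i * a j = a j)"

definition co :: "('i \<Rightarrow> 'a::ring) \<Rightarrow> ('j \<Rightarrow> 'a) \<Rightarrow> 'j \<Rightarrow> 'i" where
  "co e a j = (THE i. a j * e i = a j)"

text \<open>Formal (possibly infinite) combinations are functions 'j => 'r.\<close>
definition J_left :: "('i \<Rightarrow> 'a::ring) \<Rightarrow> ('j \<Rightarrow> 'a) \<Rightarrow> ('j \<Rightarrow> 'r::zero) \<Rightarrow> 'i \<Rightarrow> 'j set" where
  "J_left e a f i = {j. f j \<noteq> 0 \<and> ro e a j = i}"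

definition J_right :: "('i \<Rightarrow> 'a::ring) \<Rightarrow> ('j \<Rightarrow> 'a) \<Rightarrow> ('j \<Rightarrow> 'r::zero) \<Rightarrow> 'i \<Rightarrow> 'j set" where
  "J_right e a f i = {j. f j \<noteq> 0 \<and> co e a j = i}"

definition dagA :: "('i \<Rightarrow> 'a::ring) \<Rightarrow> ('j \<Rightarrow> 'a) \<Rightarrow> ('j \<Rightarrow> 'r::zero) set" where
  "dagA e a = {f. \<forall>i. finite (J_left e a f i)}"

definition Adag :: "('i \<Rightarrow> 'a::ring) \<Rightarrow> ('j \<Rightarrow> 'a) \<Rightarrow> ('j \<Rightarrow> 'r::zero) set" where
  "Adag e a = {f. \<forall>i. finite (J_right e a f i)}"

definition Ahat :: "('i \<Rightarrow> 'a::ring) \<Rightarrow> ('j \<Rightarrow> 'a) \<Rightarrow> ('j \<Rightarrow> 'r::zero) set" where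
  "Ahat e a = dagA e a \<inter> Adag e a"

definition prod_pairs :: "('r::comm_ring_1 \<Rightarrow> 'a::ring \<Rightarrow> 'a) \<Rightarrow> ('j \<Rightarrow> 'a) \<Rightarrow> ('j \<Rightarrow> 'r) \<Rightarrow> ('j \<Rightarrow> 'r) \<Rightarrow> 'j \<Rightarrow> ('j \<times> 'j) set" where
  "prod_pairs sm a f g u = {(s, t). f s \<noteq> 0 \<and> g t \<noteq> 0 \<and> coord sm a (a s * a t) u \<noteq> 0}"

definition hprod :: "('r::comm_ring_1 \<Rightarrow> 'a::ring \<Rightarrow> 'a) \<Rightarrow> ('j \<Rightarrow> 'a) \<Rightarrow> ('j \<Rightarrow> 'r) \<Rightarrow> ('j \<Rightarrow> 'r) \<Rightarrow> 'j \<Rightarrow> 'r" where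
  "hprod sm a f g u = (\<Sum>(s, t)\<in>prod_pairs sm a f g u. f s * g t * coord sm a (a s * a t) u)"

text \<open>The element 1 = sum of all e_i.\<close>
definition hone :: "('i \<Rightarrow> 'a::ring) \<Rightarrow> ('j \<Rightarrow> 'a) \<Rightarrow> 'j \<Rightarrow> 'r::comm_ring_1" where
  "hone e a j = (if \<exists>i. a j = e i then 1 else 0)"

text \<open>S is an R-submodule of the formal combinations on which the product is well defined
  (all coefficient sums finite) and closed, giving an associative R-algebra with identity hone.\<close>
definition unital_completion_algebra ::
  "('r::comm_ring_1 \<Rightarrow> 'a::ring \<Rightarrow> 'a) \<Rightarrow> ('j \<Rightarrow> 'a) \<Rightarrow> ('i \<Rightarrow> 'a) \<Rightarrow> ('j \<Rightarrow> 'r) set \<Rightarrow> bool" where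
  "unital_completion_algebra sm a e S \<longleftrightarrow>
     (\<lambda>_. 0) \<in> S \<and>
     (\<forall>f\<in>S. \<forall>g\<in>S. (\<lambda>j. f j + g j) \<in> S) \<and>
     (\<forall>r. \<forall>f\<in>S. (\<lambda>j. r * f j) \<in> S) \<and>
     (\<forall>f\<in>S. \<forall>g\<in>S. (\<forall>u. finite (prod_pairs sm a f g u)) \<and> hprod sm a f g \<in> S) \<and>
     (\<forall>f\<in>S. \<forall>g\<in>S. \<forall>h\<in>S. hprod sm a (hprod sm a f g) h = hprod sm a f (hprod sm a g h)) \<and>
     (\<forall>f\<in>S. \<forall>g\<in>S. \<forall>h\<in>S. hprod sm a (\<lambda>j. f j + g j) h = (\<lambda>j. hprod sm a f h j + hprod sm a g h j)) \<and>
     (\<forall>f\<in>S. \<forall>g\<in>S. \<forall>h\<in>S. hprod sm a f (\<lambda>j. g j + h j) = (\<lambda>j. hprod sm a f g j + hprod sm a f h j)) \<and>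
     (\<forall>r. \<forall>f\<in>S. \<forall>g\<in>S. hprod sm a (\<lambda>j. r * f j) g = (\<lambda>j. r * hprod sm a f g j)) \<and>
     (\<forall>r. \<forall>f\<in>S. \<forall>g\<in>S. hprod sm a f (\<lambda>j. r * g j) = (\<lambda>j. r * hprod sm a f g j)) \<and>
     hone e a \<in> S \<and>
     (\<forall>f\<in>S. hprod sm a (hone e a) f = f \<and> hprod sm a f (hone e a) = f)"

end

theory Submission
  imports Defs
begin

locale cs =
  fixes sm :: "'r::comm_ring_1 \<Rightarrow> 'a::ring \<Rightarrow> 'a" and e :: "'i \<Rightarrow> 'a" and a :: "'j \<Rightarrow> 'a"
  assumes alg: "algebra_over sm"
    and idem: "\<forall>i. e i * e i = e i"
    and orth: "\<forall>i i'. i \<noteq> i' \<longrightarrow> e i * e i' = 0"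
    and basis: "basis_of sm a UNIV UNIV"
    and B_union1: "\<forall>j. \<exists>i i' k. a j = e i * a k * e i'"
    and e_in_B: "\<forall>i. e i \<in> range a"
    and nt: "(1::'r) \<noteq> 0"
begin

lemma sm_add: "sm (r + s) x = sm r x + sm s x" using alg unfolding algebra_over_def by blast
lemma sm_addr: "sm r (x + y) = sm r x + sm r y" using alg unfolding algebra_over_def by blast
lemma sm_mult: "sm (r * s) x = sm r (sm s x)" using alg unfolding algebra_over_def by blast
lemma sm_one: "sm 1 x = x" using alg unfolding algebra_over_def by blast
lemma sm_multl: "sm r (x * y) = sm r x * y" using alg unfolding algebra_over_def by blast
lemma sm_multr: "sm r (x * y) = x * sm r y" using alg unfolding algebra_over_def by blast
lemma sm_zero[simp]: "sm 0 x = 0"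
  using sm_add[of 0 0 x] by simp
lemma sm_zero_r[simp]: "sm r 0 = 0"
  using sm_addr[of r 0 0] by simp
lemma sm_diff: "sm (r - s) x = sm r x - sm s x"
  using sm_add[of "r - s" s x] by (simp add: algebra_simps)
lemma sm_sum: "sm r (\<Sum>w\<in>W. z w) = (\<Sum>w\<in>W. sm r (z w))"
  by (induction W rule: infinite_finite_induct) (auto simp: sm_addr)

lemma lincomb_super:
  assumes "finite W" "{j. c j \<noteq> 0} \<subseteq> W"
  shows "lincomb sm a c UNIV = (\<Sum>w\<in>W. sm (c w) (a w))"
  unfolding lincomb_def using assms by (intro sum.mono_neutral_left) auto

lemma indep: "indep_fam sm a UNIV" using basis unfolding basis_of_def by blast

lemma lc_unique:
  assumes "finite {j. c j \<noteq> 0}" "finite {j. d j \<noteq> 0}"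
    "lincomb sm a c UNIV = lincomb sm a d UNIV"
  shows "c = d"
proof -
  let ?W = "{j. c j \<noteq> 0} \<union> {j. d j \<noteq> 0}"
  have fw: "finite ?W" using assms by auto
  have "lincomb sm a (\<lambda>j. c j - d j) UNIV = (\<Sum>w\<in>?W. sm (c w - d w) (a w))"
    by (rule lincomb_super) (use fw in auto)
  also have "\<dots> = (\<Sum>w\<in>?W. sm (c w) (a w)) - (\<Sum>w\<in>?W. sm (d w) (a w))"
    by (simp add: sm_diff sum_subtractf)
  also have "\<dots> = 0"
  proof -
    have "{j. c j \<noteq> 0} \<subseteq> ?W" "{j. d j \<noteq> 0} \<subseteq> ?W" by auto
    then have "lincomb sm a c UNIV = (\<Sum>w\<in>?W. sm (c w) (a w))" "lincomb sm a d UNIV = (\<Sum>w\<in>?W. sm (d w) (a w))"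
      using lincomb_super[OF fw] by blast+
    then show ?thesis using assms(3) by simp
  qed
  finally have lc0: "lincomb sm a (\<lambda>j. c j - d j) UNIV = 0" .
  have fin0: "finite {j \<in> UNIV. c j - d j \<noteq> 0}"
    by (rule finite_subset[OF _ fw]) auto
  have "\<forall>j\<in>UNIV. c j - d j = 0"
    using spec[OF indep[unfolded indep_fam_def], of "\<lambda>j. c j - d j"] lc0 fin0 by blast
  then show ?thesis by auto
qed

lemma coord_ex: "\<exists>c. finite {j. c j \<noteq> 0} \<and> lincomb sm a c UNIV = x"
proof -
  have "x \<in> span_fam sm a UNIV" using basis unfolding basis_of_def by auto
  then show ?thesis unfolding span_fam_def by auto
qed

lemma coord_unique:
  assumes "finite {j. c j \<noteq> 0}" "lincomb sm a c UNIV = x"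
  shows "coord sm a x = c"
  unfolding coord_def
proof (rule the_equality)
  show "finite {j. c j \<noteq> 0} \<and> lincomb sm a c UNIV = x" using assms by auto
  fix d assume "finite {j. d j \<noteq> 0} \<and> lincomb sm a d UNIV = x"
  then show "d = c" using lc_unique[of d c] assms by auto
qed

lemma coord_fin: "finite {w. coord sm a x w \<noteq> 0}"
  using coord_ex[of x] coord_unique by metis

lemma coord_lc: "lincomb sm a (coord sm a x) UNIV = x"
  using coord_ex[of x] coord_unique by metis

lemma coord_expand:
  assumes "finite W" "{w. coord sm a x w \<noteq> 0} \<subseteq> W"
  shows "x = (\<Sum>w\<in>W. sm (coord sm a x w) (a w))"
  using lincomb_super[OF assms] coord_lc by simp

lemma coord_add: "coord sm a (x + y) w = coord sm a x w + coord sm a y w"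
proof -
  let ?W = "{w. coord sm a x w \<noteq> 0} \<union> {w. coord sm a y w \<noteq> 0}"
  have fw: "finite ?W" using coord_fin by auto
  have "coord sm a (x + y) = (\<lambda>w. coord sm a x w + coord sm a y w)"
  proof (rule coord_unique)
    show "finite {j. coord sm a x j + coord sm a y j \<noteq> 0}"
      by (rule finite_subset[OF _ fw]) auto
    have "lincomb sm a (\<lambda>w. coord sm a x w + coord sm a y w) UNIV
        = (\<Sum>w\<in>?W. sm (coord sm a x w + coord sm a y w) (a w))"
      by (rule lincomb_super) (use fw in auto)
    also have "\<dots> = (\<Sum>w\<in>?W. sm (coord sm a x w) (a w)) + (\<Sum>w\<in>?W. sm (coord sm a y w) (a w))"
      by (simp add: sm_add sum.distrib)
    also have "\<dots> = x + y"
      using coord_expand[OF fw, of x] coord_expand[OF fw, of y] by auto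
    finally show "lincomb sm a (\<lambda>w. coord sm a x w + coord sm a y w) UNIV = x + y" .
  qed
  then show ?thesis by simp
qed

lemma coord_sm: "coord sm a (sm r x) w = r * coord sm a x w"
proof -
  let ?W = "{w. coord sm a x w \<noteq> 0}"
  have fw: "finite ?W" using coord_fin by auto
  have "coord sm a (sm r x) = (\<lambda>w. r * coord sm a x w)"
  proof (rule coord_unique)
    show "finite {j. r * coord sm a x j \<noteq> 0}"
      by (rule finite_subset[OF _ fw]) auto
    have "lincomb sm a (\<lambda>w. r * coord sm a x w) UNIV
        = (\<Sum>w\<in>?W. sm (r * coord sm a x w) (a w))"
      by (rule lincomb_super) (use fw in auto)
    also have "\<dots> = sm r (\<Sum>w\<in>?W. sm (coord sm a x w) (a w))"
      by (simp add: sm_mult sm_sum)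
    also have "\<dots> = sm r x"
      using coord_expand[OF fw order_refl] by simp
    finally show "lincomb sm a (\<lambda>w. r * coord sm a x w) UNIV = sm r x" .
  qed
  then show ?thesis by simp
qed

lemma coord_zero[simp]: "coord sm a 0 w = 0"
proof -
  have "coord sm a 0 = (\<lambda>_. 0)"
    by (rule coord_unique) (auto simp: lincomb_def)
  then show ?thesis by simp
qed

lemma coord_sum: "coord sm a (\<Sum>w\<in>W. z w) v = (\<Sum>w\<in>W. coord sm a (z w) v)"
  by (induction W rule: infinite_finite_induct) (auto simp: coord_add)

lemma coord_a: "coord sm a (a v) w = (if w = v then 1 else 0)"
proof -
  have "coord sm a (a v) = (\<lambda>w. if w = v then 1 else 0)"
  proof (rule coord_unique)
    show "finite {j. (if j = v then 1 else 0::'r) \<noteq> 0}" by auto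
    have "lincomb sm a (\<lambda>w. if w = v then 1 else 0) UNIV = (\<Sum>w\<in>{v}. sm (if w = v then 1 else 0) (a w))"
      by (rule lincomb_super) auto
    then show "lincomb sm a (\<lambda>w. if w = v then 1 else 0) UNIV = a v" by (simp add: sm_one)
  qed
  then show ?thesis by simp
qed

lemma a_inj: "inj a"
proof (rule injI)
  fix x y assume "a x = a y"
  then have "coord sm a (a x) x = coord sm a (a y) x" by simp
  then show "x = y" using nt by (auto simp: coord_a split: if_splits)
qed

lemma a_nz: "a j \<noteq> 0"
proof
  assume "a j = 0"
  then have "coord sm a (a j) j = coord sm a 0 j" by simp
  then show False using nt by (simp add: coord_a)
qed


lemma ro_ex: "\<exists>i. e i * a j = a j"
proof -
  obtain i i' k where "a j = e i * a k * e i'" using B_union1 by blast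
  then have "e i * a j = a j" using idem by (simp add: mult.assoc[symmetric])
  then show ?thesis by blast
qed

lemma co_ex: "\<exists>i. a j * e i = a j"
proof -
  obtain i i' k where "a j = e i * a k * e i'" using B_union1 by blast
  then have "a j * e i' = a j" using idem by (simp add: mult.assoc)
  then show ?thesis by blast
qed

lemma ro_uniq: "e i * a j = a j \<Longrightarrow> e i' * a j = a j \<Longrightarrow> i = i'"
proof (rule ccontr)
  assume h: "e i * a j = a j" "e i' * a j = a j" "i \<noteq> i'"
  have "a j = e i * (e i' * a j)" using h by simp
  also have "\<dots> = (e i * e i') * a j" by (simp add: mult.assoc)
  also have "\<dots> = 0" using orth h by simp
  finally show False using a_nz by simp
qed

lemma co_uniq: "a j * e i = a j \<Longrightarrow> a j * e i' = a j \<Longrightarrow> i = i'"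
proof (rule ccontr)
  assume h: "a j * e i = a j" "a j * e i' = a j" "i \<noteq> i'"
  have "a j = (a j * e i') * e i" using h by simp
  also have "\<dots> = a j * (e i' * e i)" by (simp add: mult.assoc)
  also have "\<dots> = 0" using orth h by simp
  finally show False using a_nz by simp
qed

lemma ro_spec: "e (ro e a j) * a j = a j"
  unfolding ro_def using ro_ex[of j] ro_uniq by (metis (mono_tags, lifting) theI)

lemma co_spec: "a j * e (co e a j) = a j"
  unfolding co_def using co_ex[of j] co_uniq by (metis (mono_tags, lifting) theI)

lemma ro_eq: "e i * a j = a j \<Longrightarrow> ro e a j = i"
  using ro_spec ro_uniq by blast

lemma co_eq: "a j * e i = a j \<Longrightarrow> co e a j = i"
  using co_spec co_uniq by blast

lemma ro_other: "i \<noteq> ro e a j \<Longrightarrow> e i * a j = 0"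
proof -
  assume "i \<noteq> ro e a j"
  then have "e i * a j = (e i * e (ro e a j)) * a j" using ro_spec by (simp add: mult.assoc)
  then show ?thesis using orth \<open>i \<noteq> ro e a j\<close> by simp
qed

lemma co_other: "i \<noteq> co e a j \<Longrightarrow> a j * e i = 0"
proof -
  assume "i \<noteq> co e a j"
  then have "a j * e i = a j * (e (co e a j) * e i)" using co_spec by (metis mult.assoc)
  then show ?thesis using orth \<open>i \<noteq> co e a j\<close> by simp
qed

lemma ro_e: "a j = e k \<Longrightarrow> ro e a j = k"
  using ro_eq idem by simp

lemma co_e: "a j = e k \<Longrightarrow> co e a j = k"
  using co_eq idem by simp

lemma coord_left: "coord sm a (e i * x) v = (if ro e a v = i then coord sm a x v else 0)"
proof -
  let ?W = "{w. coord sm a x w \<noteq> 0}"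
  have fw: "finite ?W" using coord_fin by auto
  have "e i * x = e i * (\<Sum>w\<in>?W. sm (coord sm a x w) (a w))"
    using coord_expand[OF fw order_refl] by simp
  also have "\<dots> = (\<Sum>w\<in>?W. sm (coord sm a x w) (e i * a w))"
    by (simp add: sum_distrib_left sm_multr)
  finally have "coord sm a (e i * x) v = (\<Sum>w\<in>?W. coord sm a x w * coord sm a (e i * a w) v)"
    by (simp add: coord_sum coord_sm)
  also have "\<dots> = (\<Sum>w\<in>?W. if w = v then (if ro e a v = i then coord sm a x v else 0) else 0)"
  proof (rule sum.cong)
    fix w
    show "coord sm a x w * coord sm a (e i * a w) v = (if w = v then (if ro e a v = i then coord sm a x v else 0) else 0)"
    proof (cases "ro e a w = i")
      case True
      then show ?thesis using ro_spec[of w] by (auto simp: coord_a)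
    next
      case False
      then show ?thesis using ro_other[of i w] by auto
    qed
  qed simp
  also have "\<dots> = (if ro e a v = i then coord sm a x v else 0)"
    using fw by (cases "coord sm a x v = 0") (auto simp: sum.delta)
  finally show ?thesis .
qed

lemma coord_right: "coord sm a (x * e i) v = (if co e a v = i then coord sm a x v else 0)"
proof -
  let ?W = "{w. coord sm a x w \<noteq> 0}"
  have fw: "finite ?W" using coord_fin by auto
  have "x * e i = (\<Sum>w\<in>?W. sm (coord sm a x w) (a w)) * e i"
    using coord_expand[OF fw order_refl] by simp
  also have "\<dots> = (\<Sum>w\<in>?W. sm (coord sm a x w) (a w * e i))"
    by (simp add: sum_distrib_right sm_multl)
  finally have "coord sm a (x * e i) v = (\<Sum>w\<in>?W. coord sm a x w * coord sm a (a w * e i) v)"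
    by (simp add: coord_sum coord_sm)
  also have "\<dots> = (\<Sum>w\<in>?W. if w = v then (if co e a v = i then coord sm a x v else 0) else 0)"
  proof (rule sum.cong)
    fix w
    show "coord sm a x w * coord sm a (a w * e i) v = (if w = v then (if co e a v = i then coord sm a x v else 0) else 0)"
    proof (cases "co e a w = i")
      case True
      then show ?thesis using co_spec[of w] by (auto simp: coord_a)
    next
      case False
      then show ?thesis using co_other[of i w] by auto
    qed
  qed simp
  also have "\<dots> = (if co e a v = i then coord sm a x v else 0)"
    using fw by (cases "coord sm a x v = 0") (auto simp: sum.delta)
  finally show ?thesis .
qed

lemma R1: "coord sm a (a s * a t) u \<noteq> 0 \<Longrightarrow> ro e a u = ro e a s"
proof -
  assume h: "coord sm a (a s * a t) u \<noteq> 0"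
  have "a s * a t = e (ro e a s) * (a s * a t)" using ro_spec[of s] by (metis mult.assoc)
  then show ?thesis using h coord_left by (metis)
qed

lemma R2: "coord sm a (a s * a t) u \<noteq> 0 \<Longrightarrow> co e a u = co e a t"
proof -
  assume h: "coord sm a (a s * a t) u \<noteq> 0"
  have "a s * a t = (a s * a t) * e (co e a t)" using co_spec[of t] by (metis mult.assoc)
  then show ?thesis using h coord_right by (metis)
qed

lemma R3: "coord sm a (a s * a t) u \<noteq> 0 \<Longrightarrow> ro e a t = co e a s"
proof (rule ccontr)
  assume h: "coord sm a (a s * a t) u \<noteq> 0" "ro e a t \<noteq> co e a s"
  have "a s * a t = a s * (e (co e a s) * e (ro e a t)) * a t"
    using ro_spec[of t] co_spec[of s] by (metis mult.assoc)
  also have "\<dots> = 0" using orth h(2) by simp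
  finally show False using h(1) by simp
qed

lemma I1:
  assumes "finite W" "{w. coord sm a x w \<noteq> 0} \<subseteq> W"
  shows "(\<Sum>w\<in>W. coord sm a x w * coord sm a (a w * y) u) = coord sm a (x * y) u"
proof -
  have "x * y = (\<Sum>w\<in>W. sm (coord sm a x w) (a w)) * y"
    using coord_expand[OF assms] by simp
  also have "\<dots> = (\<Sum>w\<in>W. sm (coord sm a x w) (a w * y))"
    by (simp add: sum_distrib_right sm_multl)
  finally show ?thesis by (simp add: coord_sum coord_sm)
qed

lemma I2:
  assumes "finite W" "{w. coord sm a x w \<noteq> 0} \<subseteq> W"
  shows "(\<Sum>w\<in>W. coord sm a x w * coord sm a (y * a w) u) = coord sm a (y * x) u"
proof -
  have "y * x = y * (\<Sum>w\<in>W. sm (coord sm a x w) (a w))"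
    using coord_expand[OF assms] by simp
  also have "\<dots> = (\<Sum>w\<in>W. sm (coord sm a x w) (y * a w))"
    by (simp add: sum_distrib_left sm_multr)
  finally show ?thesis by (simp add: coord_sum coord_sm)
qed


abbreviation "PP \<equiv> prod_pairs sm a"
abbreviation "HP \<equiv> hprod sm a"
abbreviation "cd \<equiv> coord sm a"
abbreviation "rw \<equiv> ro e a"
abbreviation "cl \<equiv> co e a"

lemma L_ext:
  assumes "finite X" "finite Y" "PP f g u \<subseteq> X \<times> Y"
  shows "HP f g u = (\<Sum>s\<in>X. \<Sum>t\<in>Y. f s * g t * cd (a s * a t) u)"
proof -
  have "HP f g u = (\<Sum>p\<in>X \<times> Y. (case p of (s, t) \<Rightarrow> f s * g t * cd (a s * a t) u))"
    unfolding hprod_def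
    by (rule sum.mono_neutral_left) (use assms in \<open>auto simp: prod_pairs_def\<close>)
  then show ?thesis by (simp add: sum.cartesian_product)
qed

lemma PP_ne: "HP f g w \<noteq> 0 \<Longrightarrow> \<exists>s t. (s, t) \<in> PP f g w"
  unfolding hprod_def by (cases "PP f g w = {}") auto

lemma PP_sub: "P \<subseteq> fst ` P \<times> snd ` P"
  by force

lemma resum:
  fixes A :: "'s \<Rightarrow> 't \<Rightarrow> 'w \<Rightarrow> 'r"
  shows "(\<Sum>w\<in>W. \<Sum>v\<in>Z. (\<Sum>s\<in>X. \<Sum>t\<in>Y. A s t w) * B w v) =
   (\<Sum>s\<in>X. \<Sum>t\<in>Y. \<Sum>v\<in>Z. \<Sum>w\<in>W. A s t w * B w v)"
proof -
  have "(\<Sum>w\<in>W. \<Sum>v\<in>Z. (\<Sum>s\<in>X. \<Sum>t\<in>Y. A s t w) * B w v) =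
        (\<Sum>w\<in>W. \<Sum>v\<in>Z. \<Sum>s\<in>X. \<Sum>t\<in>Y. A s t w * B w v)"
    by (simp add: sum_distrib_right)
  also have "\<dots> = (\<Sum>w\<in>W. \<Sum>s\<in>X. \<Sum>t\<in>Y. \<Sum>v\<in>Z. A s t w * B w v)"
    by (simp add: sum.swap[of _ Z] sum.swap[of _ Z Y])
  also have "\<dots> = (\<Sum>s\<in>X. \<Sum>t\<in>Y. \<Sum>w\<in>W. \<Sum>v\<in>Z. A s t w * B w v)"
    by (simp add: sum.swap[of _ W] sum.swap[of _ W Y])
  also have "\<dots> = (\<Sum>s\<in>X. \<Sum>t\<in>Y. \<Sum>v\<in>Z. \<Sum>w\<in>W. A s t w * B w v)"
    by (simp add: sum.swap[of _ W Z])
  finally show ?thesis .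
qed

lemma resum2:
  fixes A :: "'t \<Rightarrow> 'v \<Rightarrow> 'w \<Rightarrow> 'r"
  shows "(\<Sum>s\<in>X. \<Sum>w\<in>W. f s * (\<Sum>t\<in>Y. \<Sum>v\<in>Z. A t v w) * B s w) =
   (\<Sum>s\<in>X. \<Sum>t\<in>Y. \<Sum>v\<in>Z. \<Sum>w\<in>W. f s * A t v w * B s w)"
proof -
  have "(\<Sum>s\<in>X. \<Sum>w\<in>W. f s * (\<Sum>t\<in>Y. \<Sum>v\<in>Z. A t v w) * B s w) =
        (\<Sum>s\<in>X. \<Sum>w\<in>W. \<Sum>t\<in>Y. \<Sum>v\<in>Z. f s * A t v w * B s w)"
    by (simp add: sum_distrib_right sum_distrib_left)
  also have "\<dots> = (\<Sum>s\<in>X. \<Sum>t\<in>Y. \<Sum>w\<in>W. \<Sum>v\<in>Z. f s * A t v w * B s w)"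
    by (simp add: sum.swap[of _ W Y])
  also have "\<dots> = (\<Sum>s\<in>X. \<Sum>t\<in>Y. \<Sum>v\<in>Z. \<Sum>w\<in>W. f s * A t v w * B s w)"
    by (simp add: sum.swap[of _ W Z])
  finally show ?thesis .
qed

lemma assoc_general:
  assumes fin: "finite X" "finite Y" "finite Z" "finite W" "finite W'"
    and A1: "PP (HP f g) h u \<subseteq> W \<times> Z"
    and B1: "\<And>w. w \<in> W \<Longrightarrow> PP f g w \<subseteq> X \<times> Y"
    and C1: "\<And>s t. s \<in> X \<Longrightarrow> t \<in> Y \<Longrightarrow> {w. cd (a s * a t) w \<noteq> 0} \<subseteq> W"
    and A2: "PP f (HP g h) u \<subseteq> X \<times> W'"
    and B2: "\<And>w. w \<in> W' \<Longrightarrow> PP g h w \<subseteq> Y \<times> Z"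
    and C2: "\<And>t v. t \<in> Y \<Longrightarrow> v \<in> Z \<Longrightarrow> {w. cd (a t * a v) w \<noteq> 0} \<subseteq> W'"
  shows "HP (HP f g) h u = HP f (HP g h) u"
proof -
  have "HP (HP f g) h u = (\<Sum>w\<in>W. \<Sum>v\<in>Z. HP f g w * h v * cd (a w * a v) u)"
    using L_ext[OF fin(4) fin(3) A1] .
  also have "\<dots> = (\<Sum>w\<in>W. \<Sum>v\<in>Z. (\<Sum>s\<in>X. \<Sum>t\<in>Y. f s * g t * cd (a s * a t) w) * (h v * cd (a w * a v) u))"
    using L_ext[OF fin(1) fin(2) B1] by (simp add: mult.assoc)
  also have "\<dots> = (\<Sum>s\<in>X. \<Sum>t\<in>Y. \<Sum>v\<in>Z. \<Sum>w\<in>W. f s * g t * cd (a s * a t) w * (h v * cd (a w * a v) u))"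
    by (rule resum)
  also have "\<dots> = (\<Sum>s\<in>X. \<Sum>t\<in>Y. \<Sum>v\<in>Z. f s * g t * h v * cd (a s * a t * a v) u)"
  proof (intro sum.cong refl)
    fix s t v assume st: "s \<in> X" "t \<in> Y" "v \<in> Z"
    have "(\<Sum>w\<in>W. f s * g t * cd (a s * a t) w * (h v * cd (a w * a v) u))
        = f s * g t * h v * (\<Sum>w\<in>W. cd (a s * a t) w * cd (a w * a v) u)"
      by (simp add: sum_distrib_left mult_ac)
    also have "\<dots> = f s * g t * h v * cd (a s * a t * a v) u"
      using I1[OF fin(4) C1[OF st(1,2)]] by simp
    finally show "(\<Sum>w\<in>W. f s * g t * cd (a s * a t) w * (h v * cd (a w * a v) u))
        = f s * g t * h v * cd (a s * a t * a v) u" .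
  qed
  finally have L: "HP (HP f g) h u = (\<Sum>s\<in>X. \<Sum>t\<in>Y. \<Sum>v\<in>Z. f s * g t * h v * cd (a s * a t * a v) u)" .
  have "HP f (HP g h) u = (\<Sum>s\<in>X. \<Sum>w\<in>W'. f s * HP g h w * cd (a s * a w) u)"
    using L_ext[OF fin(1) fin(5) A2] .
  also have "\<dots> = (\<Sum>s\<in>X. \<Sum>w\<in>W'. f s * (\<Sum>t\<in>Y. \<Sum>v\<in>Z. g t * h v * cd (a t * a v) w) * cd (a s * a w) u)"
    using L_ext[OF fin(2) fin(3) B2] by simp
  also have "\<dots> = (\<Sum>s\<in>X. \<Sum>t\<in>Y. \<Sum>v\<in>Z. \<Sum>w\<in>W'. f s * (g t * h v * cd (a t * a v) w) * cd (a s * a w) u)"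
    by (rule resum2)
  also have "\<dots> = (\<Sum>s\<in>X. \<Sum>t\<in>Y. \<Sum>v\<in>Z. f s * g t * h v * cd (a s * a t * a v) u)"
  proof (intro sum.cong refl)
    fix s t v assume st: "s \<in> X" "t \<in> Y" "v \<in> Z"
    have "(\<Sum>w\<in>W'. f s * (g t * h v * cd (a t * a v) w) * cd (a s * a w) u)
        = f s * g t * h v * (\<Sum>w\<in>W'. cd (a t * a v) w * cd (a s * a w) u)"
      by (simp add: sum_distrib_left mult_ac)
    also have "\<dots> = f s * g t * h v * cd (a s * (a t * a v)) u"
      using I2[OF fin(5) C2[OF st(2,3)]] by simp
    finally show "(\<Sum>w\<in>W'. f s * (g t * h v * cd (a t * a v) w) * cd (a s * a w) u)
        = f s * g t * h v * cd (a s * a t * a v) u" by (simp add: mult.assoc)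
  qed
  finally show ?thesis using L by simp
qed

lemma distrib_l:
  assumes "finite (PP f h u)" "finite (PP g h u)" "finite (PP (\<lambda>j. f j + g j) h u)"
  shows "HP (\<lambda>j. f j + g j) h u = HP f h u + HP g h u"
proof -
  let ?P = "PP f h u \<union> PP g h u \<union> PP (\<lambda>j. f j + g j) h u"
  have fP: "finite (fst ` ?P)" "finite (snd ` ?P)" using assms by auto
  have s: "PP f h u \<subseteq> fst ` ?P \<times> snd ` ?P" "PP g h u \<subseteq> fst ` ?P \<times> snd ` ?P"
      "PP (\<lambda>j. f j + g j) h u \<subseteq> fst ` ?P \<times> snd ` ?P"
    using PP_sub[of ?P] by blast+
  show ?thesis
    using L_ext[OF fP s(1)] L_ext[OF fP s(2)] L_ext[OF fP s(3)]
    by (simp add: sum.distrib distrib_right)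
qed

lemma distrib_r:
  assumes "finite (PP f g u)" "finite (PP f h u)" "finite (PP f (\<lambda>j. g j + h j) u)"
  shows "HP f (\<lambda>j. g j + h j) u = HP f g u + HP f h u"
proof -
  let ?P = "PP f g u \<union> PP f h u \<union> PP f (\<lambda>j. g j + h j) u"
  have fP: "finite (fst ` ?P)" "finite (snd ` ?P)" using assms by auto
  have s: "PP f g u \<subseteq> fst ` ?P \<times> snd ` ?P" "PP f h u \<subseteq> fst ` ?P \<times> snd ` ?P"
      "PP f (\<lambda>j. g j + h j) u \<subseteq> fst ` ?P \<times> snd ` ?P"
    using PP_sub[of ?P] by blast+
  show ?thesis
    using L_ext[OF fP s(1)] L_ext[OF fP s(2)] L_ext[OF fP s(3)]
    by (simp add: sum.distrib distrib_left distrib_right)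
qed

lemma scal_l:
  assumes "finite (PP f g u)"
  shows "HP (\<lambda>j. r * f j) g u = r * HP f g u"
proof -
  let ?P = "PP f g u"
  have fP: "finite (fst ` ?P)" "finite (snd ` ?P)" using assms by auto
  have s: "PP f g u \<subseteq> fst ` ?P \<times> snd ` ?P" using PP_sub[of ?P] by blast
  have s2: "PP (\<lambda>j. r * f j) g u \<subseteq> fst ` ?P \<times> snd ` ?P"
  proof -
    have "PP (\<lambda>j. r * f j) g u \<subseteq> PP f g u" unfolding prod_pairs_def by auto
    then show ?thesis using s by blast
  qed
  show ?thesis
    using L_ext[OF fP s] L_ext[OF fP s2]
    by (simp add: sum_distrib_left mult.assoc)
qed

lemma scal_r:
  assumes "finite (PP f g u)"
  shows "HP f (\<lambda>j. r * g j) u = r * HP f g u"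
proof -
  let ?P = "PP f g u"
  have fP: "finite (fst ` ?P)" "finite (snd ` ?P)" using assms by auto
  have s: "PP f g u \<subseteq> fst ` ?P \<times> snd ` ?P" using PP_sub[of ?P] by blast
  have s2: "PP f (\<lambda>j. r * g j) u \<subseteq> fst ` ?P \<times> snd ` ?P"
  proof -
    have "PP f (\<lambda>j. r * g j) u \<subseteq> PP f g u" unfolding prod_pairs_def by auto
    then show ?thesis using s by blast
  qed
  show ?thesis
    using L_ext[OF fP s] L_ext[OF fP s2]
    by (simp add: sum_distrib_left mult_ac)
qed

lemma one_l: "HP (hone e a) f u = f u"
proof -
  obtain s0 where s0: "a s0 = e (rw u)" using e_in_B by (metis rangeE)
  have sub: "PP (hone e a) f u \<subseteq> {s0} \<times> {u}"
  proof
    fix p assume "p \<in> PP (hone e a) f u"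
    then obtain s t where p: "p = (s, t)" "hone e a s \<noteq> (0::'r)" "f t \<noteq> 0" "cd (a s * a t) u \<noteq> 0"
      unfolding prod_pairs_def by auto
    have "\<exists>k. a s = e k" using p(2) unfolding hone_def by (auto split: if_splits)
    then obtain k where k: "a s = e k" by blast
    have "rw u = rw s" using R1 p(4) by blast
    then have "rw u = k" using ro_e[OF k] by simp
    then have "s = s0" using s0 k a_inj by (metis injD)
    have "rw t = cl s" using R3 p(4) by blast
    then have "rw t = k" using co_e[OF k] by simp
    then have "a s * a t = a t" using k ro_spec[of t] by simp
    then have "t = u" using p(4) by (auto simp: coord_a split: if_splits)
    then show "p \<in> {s0} \<times> {u}" using p \<open>s = s0\<close> by simp
  qed
  have "HP (hone e a) f u = hone e a s0 * f u * cd (a s0 * a u) u"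
    using L_ext[OF _ _ sub] by simp
  also have "\<dots> = f u"
    using s0 ro_spec[of u] by (auto simp: hone_def coord_a)
  finally show ?thesis .
qed

lemma one_r: "HP f (hone e a) u = f u"
proof -
  obtain t0 where t0: "a t0 = e (cl u)" using e_in_B by (metis rangeE)
  have sub: "PP f (hone e a) u \<subseteq> {u} \<times> {t0}"
  proof
    fix p assume "p \<in> PP f (hone e a) u"
    then obtain s t where p: "p = (s, t)" "f s \<noteq> 0" "hone e a t \<noteq> (0::'r)" "cd (a s * a t) u \<noteq> 0"
      unfolding prod_pairs_def by auto
    have "\<exists>k. a t = e k" using p(3) unfolding hone_def by (auto split: if_splits)
    then obtain k where k: "a t = e k" by blast
    have "cl u = cl t" using R2 p(4) by blast
    then have "cl u = k" using co_e[OF k] by simp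
    then have "t = t0" using t0 k a_inj by (metis injD)
    have "rw t = cl s" using R3 p(4) by blast
    then have "cl s = k" using ro_e[OF k] by simp
    then have "a s * a t = a s" using k co_spec[of s] by simp
    then have "s = u" using p(4) by (auto simp: coord_a split: if_splits)
    then show "p \<in> {u} \<times> {t0}" using p \<open>t = t0\<close> by simp
  qed
  have "HP f (hone e a) u = f u * hone e a t0 * cd (a u * a t0) u"
    using L_ext[OF _ _ sub] by simp
  also have "\<dots> = f u"
    using t0 co_spec[of u] by (auto simp: hone_def coord_a)
  finally show ?thesis .
qed

lemma hone_fin: "finite {j. hone e a j \<noteq> (0::'r) \<and> (rw j = i \<or> cl j = i)}"
proof (rule finite_subset)
  show "{j. hone e a j \<noteq> (0::'r) \<and> (rw j = i \<or> cl j = i)} \<subseteq> a -` {e i}"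
    using ro_e co_e by (auto simp: hone_def split: if_splits)
  show "finite (a -` {e i})" using a_inj by (auto intro: finite_vimageI)
qed


abbreviation "JL \<equiv> J_left e a"
abbreviation "JR \<equiv> J_right e a"

lemma PP_dag: "(s, t) \<in> PP f g u \<Longrightarrow> s \<in> JL f (rw u) \<and> t \<in> JL g (cl s)"
  unfolding prod_pairs_def J_left_def using R1 R3 by auto

lemma PP_adag: "(s, t) \<in> PP f g u \<Longrightarrow> t \<in> JR g (cl u) \<and> s \<in> JR f (rw t)"
  unfolding prod_pairs_def J_right_def using R2 R3 by auto

lemma cdfin: "finite {w. cd x w \<noteq> 0}" by (rule coord_fin)

lemma finPP_dag:
  assumes "f \<in> dagA e a" "g \<in> dagA e a"
  shows "finite (PP f g u)"
proof (rule finite_subset)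
  show "PP f g u \<subseteq> Sigma (JL f (rw u)) (\<lambda>s. JL g (cl s))"
    using PP_dag by fast
  show "finite (Sigma (JL f (rw u)) (\<lambda>s. JL g (cl s)))"
    using assms unfolding dagA_def by auto
qed

lemma finPP_adag:
  assumes "f \<in> Adag e a" "g \<in> Adag e a"
  shows "finite (PP f g u)"
proof (rule finite_subset)
  show "PP f g u \<subseteq> (\<lambda>(t, s). (s, t)) ` Sigma (JR g (cl u)) (\<lambda>t. JR f (rw t))"
  proof
    fix p assume "p \<in> PP f g u"
    then obtain s t where "p = (s, t)" "(s, t) \<in> PP f g u" by (cases p) auto
    then show "p \<in> (\<lambda>(t, s). (s, t)) ` Sigma (JR g (cl u)) (\<lambda>t. JR f (rw t))"
      using PP_adag by (auto intro!: image_eqI[of _ _ "(t, s)"])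
  qed
  show "finite ((\<lambda>(t, s). (s, t)) ` Sigma (JR g (cl u)) (\<lambda>t. JR f (rw t)))"
    using assms unfolding Adag_def by auto
qed

lemma closed_dag:
  assumes "f \<in> dagA e a" "g \<in> dagA e a"
  shows "HP f g \<in> dagA e a"
  unfolding dagA_def
proof (intro CollectI allI)
  fix i
  have "JL (HP f g) i \<subseteq> (\<Union>s\<in>JL f i. \<Union>t\<in>JL g (cl s). {w. cd (a s * a t) w \<noteq> 0})"
  proof
    fix w assume w: "w \<in> JL (HP f g) i"
    then obtain s t where st: "(s, t) \<in> PP f g w" using PP_ne unfolding J_left_def by blast
    then have "s \<in> JL f i" "t \<in> JL g (cl s)" "cd (a s * a t) w \<noteq> 0"
      using PP_dag[OF st] w unfolding J_left_def prod_pairs_def by auto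
    then show "w \<in> (\<Union>s\<in>JL f i. \<Union>t\<in>JL g (cl s). {w. cd (a s * a t) w \<noteq> 0})" by blast
  qed
  moreover have "finite (\<Union>s\<in>JL f i. \<Union>t\<in>JL g (cl s). {w. cd (a s * a t) w \<noteq> 0})"
    using assms unfolding dagA_def by (auto intro: cdfin)
  ultimately show "finite (JL (HP f g) i)" by (rule finite_subset)
qed

lemma closed_adag:
  assumes "f \<in> Adag e a" "g \<in> Adag e a"
  shows "HP f g \<in> Adag e a"
  unfolding Adag_def
proof (intro CollectI allI)
  fix i
  have "JR (HP f g) i \<subseteq> (\<Union>t\<in>JR g i. \<Union>s\<in>JR f (rw t). {w. cd (a s * a t) w \<noteq> 0})"
  proof
    fix w assume w: "w \<in> JR (HP f g) i"
    then obtain s t where st: "(s, t) \<in> PP f g w" using PP_ne unfolding J_right_def by blast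
    then have "t \<in> JR g i" "s \<in> JR f (rw t)" "cd (a s * a t) w \<noteq> 0"
      using PP_adag[OF st] w unfolding J_right_def prod_pairs_def by auto
    then show "w \<in> (\<Union>t\<in>JR g i. \<Union>s\<in>JR f (rw t). {w. cd (a s * a t) w \<noteq> 0})" by blast
  qed
  moreover have "finite (\<Union>t\<in>JR g i. \<Union>s\<in>JR f (rw t). {w. cd (a s * a t) w \<noteq> 0})"
    using assms unfolding Adag_def by (auto intro: cdfin)
  ultimately show "finite (JR (HP f g) i)" by (rule finite_subset)
qed

lemma assoc_dag:
  assumes f: "f \<in> dagA e a" and g: "g \<in> dagA e a" and h: "h \<in> dagA e a"
  shows "HP (HP f g) h u = HP f (HP g h) u"
proof -
  define i where "i = rw u"
  define X where "X = JL f i"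
  define Y where "Y = (\<Union>s\<in>X. JL g (cl s))"
  define Z where "Z = (\<Union>t\<in>Y. JL h (cl t))"
  define W where "W = (\<Union>s\<in>X. \<Union>t\<in>Y. {w. cd (a s * a t) w \<noteq> 0})"
  define W' where "W' = (\<Union>t\<in>Y. \<Union>v\<in>Z. {w. cd (a t * a v) w \<noteq> 0})"
  have fX: "finite X" using f unfolding X_def dagA_def by auto
  have fY: "finite Y" using fX g unfolding Y_def dagA_def by auto
  have fZ: "finite Z" using fY h unfolding Z_def dagA_def by auto
  have fW: "finite W" using fX fY unfolding W_def by (auto intro: cdfin)
  have fW': "finite W'" using fY fZ unfolding W'_def by (auto intro: cdfin)
  show ?thesis
  proof (rule assoc_general[OF fX fY fZ fW fW'])
    show "PP (HP f g) h u \<subseteq> W \<times> Z"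
    proof (clarify)
      fix w v assume wv: "(w, v) \<in> PP (HP f g) h u"
      then have w1: "w \<in> JL (HP f g) i" and v1: "v \<in> JL h (cl w)" using PP_dag i_def by auto
      then obtain s t where st: "(s, t) \<in> PP f g w" using PP_ne unfolding J_left_def by blast
      have rw: "rw w = i" using w1 unfolding J_left_def by auto
      have sX: "s \<in> X" using PP_dag[OF st] rw X_def by auto
      have tY: "t \<in> Y" using PP_dag[OF st] sX Y_def by auto
      have c: "cd (a s * a t) w \<noteq> 0" using st unfolding prod_pairs_def by auto
      have "cl w = cl t" using R2[OF c] .
      then have "v \<in> Z" using v1 tY Z_def by auto
      moreover have "w \<in> W" using sX tY c W_def by auto
      ultimately show "w \<in> W \<and> v \<in> Z" by simp
    qed
    show "PP f g w \<subseteq> X \<times> Y" if "w \<in> W" for w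
    proof (clarify)
      fix s t assume st: "(s, t) \<in> PP f g w"
      from that obtain s0 t0 where s0: "s0 \<in> X" and "cd (a s0 * a t0) w \<noteq> 0" unfolding W_def by auto
      then have "rw w = rw s0" using R1 by blast
      also have "\<dots> = i" using s0 unfolding X_def J_left_def by auto
      finally have "rw w = i" .
      then have sX: "s \<in> X" using PP_dag[OF st] X_def by auto
      then have "t \<in> Y" using PP_dag[OF st] Y_def by auto
      then show "s \<in> X \<and> t \<in> Y" using sX by simp
    qed
    show "{w. cd (a s * a t) w \<noteq> 0} \<subseteq> W" if "s \<in> X" "t \<in> Y" for s t
      using that unfolding W_def by auto
    show "PP f (HP g h) u \<subseteq> X \<times> W'"
    proof (clarify)
      fix s w assume sw: "(s, w) \<in> PP f (HP g h) u"
      then have sX: "s \<in> X" and w1: "w \<in> JL (HP g h) (cl s)" using PP_dag X_def i_def by auto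
      then obtain t v where tv: "(t, v) \<in> PP g h w" using PP_ne unfolding J_left_def by blast
      have rw: "rw w = cl s" using w1 unfolding J_left_def by auto
      have tY: "t \<in> Y" using PP_dag[OF tv] rw sX Y_def by auto
      have vZ: "v \<in> Z" using PP_dag[OF tv] tY Z_def by auto
      have "cd (a t * a v) w \<noteq> 0" using tv unfolding prod_pairs_def by auto
      then have "w \<in> W'" using tY vZ W'_def by auto
      then show "s \<in> X \<and> w \<in> W'" using sX by simp
    qed
    show "PP g h w \<subseteq> Y \<times> Z" if "w \<in> W'" for w
    proof (clarify)
      fix t v assume tv: "(t, v) \<in> PP g h w"
      from that obtain t0 v0 where t0: "t0 \<in> Y" and "cd (a t0 * a v0) w \<noteq> 0" unfolding W'_def by auto
      then have r: "rw w = rw t0" using R1 by blast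
      from t0 obtain s0 where s0: "s0 \<in> X" "t0 \<in> JL g (cl s0)" unfolding Y_def by auto
      then have "rw w = cl s0" using r unfolding J_left_def by auto
      then have tY: "t \<in> Y" using PP_dag[OF tv] s0 Y_def by auto
      then have "v \<in> Z" using PP_dag[OF tv] Z_def by auto
      then show "t \<in> Y \<and> v \<in> Z" using tY by simp
    qed
    show "{w. cd (a t * a v) w \<noteq> 0} \<subseteq> W'" if "t \<in> Y" "v \<in> Z" for t v
      using that unfolding W'_def by auto
  qed
qed

lemma assoc_adag:
  assumes f: "f \<in> Adag e a" and g: "g \<in> Adag e a" and h: "h \<in> Adag e a"
  shows "HP (HP f g) h u = HP f (HP g h) u"
proof -
  define k where "k = cl u"
  define Z where "Z = JR h k"
  define Y where "Y = (\<Union>v\<in>Z. JR g (rw v))"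
  define X where "X = (\<Union>t\<in>Y. JR f (rw t))"
  define W where "W = (\<Union>s\<in>X. \<Union>t\<in>Y. {w. cd (a s * a t) w \<noteq> 0})"
  define W' where "W' = (\<Union>t\<in>Y. \<Union>v\<in>Z. {w. cd (a t * a v) w \<noteq> 0})"
  have fZ: "finite Z" using h unfolding Z_def Adag_def by auto
  have fY: "finite Y" using fZ g unfolding Y_def Adag_def by auto
  have fX: "finite X" using fY f unfolding X_def Adag_def by auto
  have fW: "finite W" using fX fY unfolding W_def by (auto intro: cdfin)
  have fW': "finite W'" using fY fZ unfolding W'_def by (auto intro: cdfin)
  show ?thesis
  proof (rule assoc_general[OF fX fY fZ fW fW'])
    show "PP (HP f g) h u \<subseteq> W \<times> Z"
    proof (clarify)
      fix w v assume wv: "(w, v) \<in> PP (HP f g) h u"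
      then have vZ: "v \<in> Z" and w1: "w \<in> JR (HP f g) (rw v)" using PP_adag Z_def k_def by auto
      then obtain s t where st: "(s, t) \<in> PP f g w" using PP_ne unfolding J_right_def by blast
      have cw: "cl w = rw v" using w1 unfolding J_right_def by auto
      have tY: "t \<in> Y" using PP_adag[OF st] cw vZ Y_def by auto
      have sX: "s \<in> X" using PP_adag[OF st] tY X_def by auto
      have c: "cd (a s * a t) w \<noteq> 0" using st unfolding prod_pairs_def by auto
      have "w \<in> W" using sX tY c W_def by auto
      then show "w \<in> W \<and> v \<in> Z" using vZ by simp
    qed
    show "PP f g w \<subseteq> X \<times> Y" if "w \<in> W" for w
    proof (clarify)
      fix s t assume st: "(s, t) \<in> PP f g w"
      from that obtain s0 t0 where t0: "t0 \<in> Y" and "cd (a s0 * a t0) w \<noteq> 0" unfolding W_def by auto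
      then have r: "cl w = cl t0" using R2 by blast
      from t0 obtain v0 where v0: "v0 \<in> Z" "t0 \<in> JR g (rw v0)" unfolding Y_def by auto
      then have "cl w = rw v0" using r unfolding J_right_def by auto
      then have tY: "t \<in> Y" using PP_adag[OF st] v0 Y_def by auto
      then have "s \<in> X" using PP_adag[OF st] X_def by auto
      then show "s \<in> X \<and> t \<in> Y" using tY by simp
    qed
    show "{w. cd (a s * a t) w \<noteq> 0} \<subseteq> W" if "s \<in> X" "t \<in> Y" for s t
      using that unfolding W_def by auto
    show "PP f (HP g h) u \<subseteq> X \<times> W'"
    proof (clarify)
      fix s w assume sw: "(s, w) \<in> PP f (HP g h) u"
      then have w1: "w \<in> JR (HP g h) k" and s1: "s \<in> JR f (rw w)" using PP_adag k_def by auto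
      then obtain t v where tv: "(t, v) \<in> PP g h w" using PP_ne unfolding J_right_def by blast
      have cw: "cl w = k" using w1 unfolding J_right_def by auto
      have vZ: "v \<in> Z" using PP_adag[OF tv] cw Z_def by auto
      have tY: "t \<in> Y" using PP_adag[OF tv] vZ Y_def by auto
      have c: "cd (a t * a v) w \<noteq> 0" using tv unfolding prod_pairs_def by auto
      then have "rw w = rw t" using R1 by blast
      then have "s \<in> X" using s1 tY X_def by auto
      moreover have "w \<in> W'" using c tY vZ W'_def by auto
      ultimately show "s \<in> X \<and> w \<in> W'" by simp
    qed
    show "PP g h w \<subseteq> Y \<times> Z" if "w \<in> W'" for w
    proof (clarify)
      fix t v assume tv: "(t, v) \<in> PP g h w"
      from that obtain t0 v0 where v0: "v0 \<in> Z" and "cd (a t0 * a v0) w \<noteq> 0" unfolding W'_def by auto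
      then have "cl w = cl v0" using R2 by blast
      also have "\<dots> = k" using v0 unfolding Z_def J_right_def by auto
      finally have "cl w = k" .
      then have vZ: "v \<in> Z" using PP_adag[OF tv] Z_def by auto
      then have "t \<in> Y" using PP_adag[OF tv] Y_def by auto
      then show "t \<in> Y \<and> v \<in> Z" using vZ by simp
    qed
    show "{w. cd (a t * a v) w \<noteq> 0} \<subseteq> W'" if "t \<in> Y" "v \<in> Z" for t v
      using that unfolding W'_def by auto
  qed
qed


lemma UCA_gen:
  assumes z: "(\<lambda>_. 0) \<in> S" and ad: "\<And>f g. f \<in> S \<Longrightarrow> g \<in> S \<Longrightarrow> (\<lambda>j. f j + g j) \<in> S"
    and sc: "\<And>r f. f \<in> S \<Longrightarrow> (\<lambda>j. r * f j) \<in> S"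
    and fin: "\<And>f g u. f \<in> S \<Longrightarrow> g \<in> S \<Longrightarrow> finite (PP f g u)"
    and cl: "\<And>f g. f \<in> S \<Longrightarrow> g \<in> S \<Longrightarrow> HP f g \<in> S"
    and as: "\<And>f g h u. f \<in> S \<Longrightarrow> g \<in> S \<Longrightarrow> h \<in> S \<Longrightarrow> HP (HP f g) h u = HP f (HP g h) u"
    and on: "hone e a \<in> S"
  shows "unital_completion_algebra sm a e S"
  unfolding unital_completion_algebra_def
proof (intro conjI ballI allI)
  show "(\<lambda>_. 0) \<in> S" by (rule z)
  show "hone e a \<in> S" by (rule on)
  fix f assume f: "f \<in> S"
  show "HP (hone e a) f = f" by (rule ext) (rule one_l)
  show "HP f (hone e a) = f" by (rule ext) (rule one_r)
  fix r show "(\<lambda>j. r * f j) \<in> S" using sc f .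
next
  fix f g assume f: "f \<in> S" and g: "g \<in> S"
  show "(\<lambda>j. f j + g j) \<in> S" using ad f g .
  fix u show "finite (PP f g u)" using fin f g .
next
  fix f g assume f: "f \<in> S" and g: "g \<in> S"
  show "HP f g \<in> S" using cl f g .
  fix h assume h: "h \<in> S"
  show "HP (HP f g) h = HP f (HP g h)" by (rule ext) (rule as[OF f g h])
  show "HP (\<lambda>j. f j + g j) h = (\<lambda>j. HP f h j + HP g h j)"
    by (rule ext) (rule distrib_l[OF fin[OF f h] fin[OF g h] fin[OF ad[OF f g] h]])
next
  fix f g h assume f: "f \<in> S" and g: "g \<in> S" and h: "h \<in> S"
  show "HP f (\<lambda>j. g j + h j) = (\<lambda>j. HP f g j + HP f h j)"
    by (rule ext) (rule distrib_r[OF fin[OF f g] fin[OF f h] fin[OF f ad[OF g h]]])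
next
  fix r f g assume f: "f \<in> S" and g: "g \<in> S"
  show "HP (\<lambda>j. r * f j) g = (\<lambda>j. r * HP f g j)"
    by (rule ext) (rule scal_l[OF fin[OF f g]])
  show "HP f (\<lambda>j. r * g j) = (\<lambda>j. r * HP f g j)"
    by (rule ext) (rule scal_r[OF fin[OF f g]])
qed

lemma dag_zero: "(\<lambda>_. 0) \<in> dagA e a" unfolding dagA_def J_left_def by simp
lemma adag_zero: "(\<lambda>_. 0) \<in> Adag e a" unfolding Adag_def J_right_def by simp
lemma dag_add: "(f::'j \<Rightarrow> 'r) \<in> dagA e a \<Longrightarrow> g \<in> dagA e a \<Longrightarrow> (\<lambda>j. f j + g j) \<in> dagA e a"
  unfolding dagA_def J_left_def
proof (intro CollectI allI)
  fix i assume "f \<in> {f. \<forall>i. finite {j. f j \<noteq> 0 \<and> rw j = i}}" "g \<in> {f. \<forall>i. finite {j. f j \<noteq> 0 \<and> rw j = i}}"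
  then have "finite ({j. f j \<noteq> 0 \<and> rw j = i} \<union> {j. g j \<noteq> 0 \<and> rw j = i})" by auto
  then show "finite {j. f j + g j \<noteq> 0 \<and> rw j = i}" by (rule finite_subset[rotated]) auto
qed
lemma adag_add: "(f::'j \<Rightarrow> 'r) \<in> Adag e a \<Longrightarrow> g \<in> Adag e a \<Longrightarrow> (\<lambda>j. f j + g j) \<in> Adag e a"
  unfolding Adag_def J_right_def
proof (intro CollectI allI)
  fix i assume "f \<in> {f. \<forall>i. finite {j. f j \<noteq> 0 \<and> cl j = i}}" "g \<in> {f. \<forall>i. finite {j. f j \<noteq> 0 \<and> cl j = i}}"
  then have "finite ({j. f j \<noteq> 0 \<and> cl j = i} \<union> {j. g j \<noteq> 0 \<and> cl j = i})" by auto
  then show "finite {j. f j + g j \<noteq> 0 \<and> cl j = i}" by (rule finite_subset[rotated]) auto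
qed
lemma dag_sc: "(f::'j \<Rightarrow> 'r) \<in> dagA e a \<Longrightarrow> (\<lambda>j. r * f j) \<in> dagA e a"
  unfolding dagA_def J_left_def
proof (intro CollectI allI)
  fix i assume "f \<in> {f. \<forall>i. finite {j. f j \<noteq> 0 \<and> rw j = i}}"
  then have "finite {j. f j \<noteq> 0 \<and> rw j = i}" by auto
  then show "finite {j. r * f j \<noteq> 0 \<and> rw j = i}" by (rule finite_subset[rotated]) auto
qed
lemma adag_sc: "(f::'j \<Rightarrow> 'r) \<in> Adag e a \<Longrightarrow> (\<lambda>j. r * f j) \<in> Adag e a"
  unfolding Adag_def J_right_def
proof (intro CollectI allI)
  fix i assume "f \<in> {f. \<forall>i. finite {j. f j \<noteq> 0 \<and> cl j = i}}"
  then have "finite {j. f j \<noteq> 0 \<and> cl j = i}" by auto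
  then show "finite {j. r * f j \<noteq> 0 \<and> cl j = i}" by (rule finite_subset[rotated]) auto
qed
lemma dag_one: "hone e a \<in> (dagA e a :: ('j \<Rightarrow> 'r) set)"
  unfolding dagA_def J_left_def
proof (intro CollectI allI)
  fix i show "finite {j. hone e a j \<noteq> (0::'r) \<and> rw j = i}"
    using hone_fin[of i] by (rule finite_subset[rotated]) auto
qed
lemma adag_one: "hone e a \<in> (Adag e a :: ('j \<Rightarrow> 'r) set)"
  unfolding Adag_def J_right_def
proof (intro CollectI allI)
  fix i show "finite {j. hone e a j \<noteq> (0::'r) \<and> cl j = i}"
    using hone_fin[of i] by (rule finite_subset[rotated]) auto
qed

lemma main: "unital_completion_algebra sm a e (dagA e a)
       \<and> unital_completion_algebra sm a e (Adag e a)
       \<and> unital_completion_algebra sm a e (Ahat e a)"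
proof (intro conjI)
  show "unital_completion_algebra sm a e (dagA e a)"
    by (rule UCA_gen) (auto intro: dag_zero dag_add dag_sc finPP_dag closed_dag assoc_dag dag_one)
  show "unital_completion_algebra sm a e (Adag e a)"
    by (rule UCA_gen) (auto intro: adag_zero adag_add adag_sc finPP_adag closed_adag assoc_adag adag_one)
  show "unital_completion_algebra sm a e (Ahat e a)"
    unfolding Ahat_def
    by (rule UCA_gen) (auto intro: dag_zero dag_add dag_sc finPP_dag closed_dag assoc_dag dag_one
        adag_zero adag_add adag_sc closed_adag adag_one)
qed

end
lemma trivial_case:
  fixes sm :: "'r::comm_ring_1 \<Rightarrow> 'a::ring \<Rightarrow> 'a" and e :: "'i \<Rightarrow> 'a" and a :: "'j \<Rightarrow> 'a"
  assumes one: "(1::'r) = 0" and S0: "(\<lambda>_. 0) \<in> S"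
  shows "unital_completion_algebra sm a e S"
proof -
  have z: "\<And>x::'r. x = 0" by (metis mult_1_right mult_zero_right one)
  have eqf: "\<And>f g :: 'j \<Rightarrow> 'r. f = g" by (rule ext) (metis z)
  have m: "\<And>f::'j \<Rightarrow> 'r. f \<in> S" using S0 eqf by metis
  have pp: "\<And>f g u. prod_pairs sm a f g u = {}" unfolding prod_pairs_def using z by auto
  show ?thesis unfolding unital_completion_algebra_def
    by (intro conjI ballI allI m eqf) (simp add: pp)
qed

theorem lemma1p1:
  fixes sm :: "'r::comm_ring_1 \<Rightarrow> 'a::ring \<Rightarrow> 'a"
    and e :: "'i \<Rightarrow> 'a"
    and a :: "'j \<Rightarrow> 'a"
  assumes alg: "algebra_over sm"
    and idem: "\<forall>i. e i * e i = e i"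
    and orth: "\<forall>i i'. i \<noteq> i' \<longrightarrow> e i * e i' = 0"
    and dsum: "corner_direct_sum e"
    and free: "\<forall>i i'. free_submodule sm (corner e i i')"
    and basis: "basis_of sm a UNIV UNIV"
    and corner_basis: "\<forall>i i'. basis_of sm (\<lambda>j. e i * a j * e i') {j. e i * a j * e i' \<noteq> 0} (corner e i i')"
    and B_union1: "\<forall>j. \<exists>i i' k. a j = e i * a k * e i'"
    and B_union2: "\<forall>i i' k. e i * a k * e i' \<noteq> 0 \<longrightarrow> e i * a k * e i' \<in> range a"
    and e_in_B: "\<forall>i. e i \<in> range a"
  shows "unital_completion_algebra sm a e (dagA e a)
       \<and> unital_completion_algebra sm a e (Adag e a)
       \<and> unital_completion_algebra sm a e (Ahat e a)"
proof (cases "(1::'r) = 0")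
  case True
  have "(\<lambda>_. 0) \<in> dagA e a" "(\<lambda>_. 0) \<in> Adag e a" "(\<lambda>_. 0) \<in> Ahat e a"
    unfolding Ahat_def dagA_def Adag_def J_left_def J_right_def by simp_all
  then show ?thesis using trivial_case[OF True] by blast
next
  case False
  interpret cs sm e a
    by (unfold_locales) (use alg idem orth basis B_union1 e_in_B False in auto)
  show ?thesis by (rule main)
qed

end
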